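(* Let $f \in \mathbb{Z}[x]$ be a tower-stable polynomial and let $b$ be an $f$-valid positive integer. Then $\lambda_f(b^{n+1})$ divides $b^n$ for every sufficiently large positive integer $n$.
   Context: For a positive integer $m$, $f_m:\mathbb{Z}/m\mathbb{Z}\to\mathbb{Z}/m\mathbb{Z}$ is the reduction of $f$, and $\lambda_f(m)$ is its period: the least common multiple over $y\in\mathbb{Z}/m\mathbb{Z}$ of the cycle length of $y$ (the least $l\ge1$ with $f_m^k(y)=f_m^{k+l}(y)$ for some $k\ge0$). $f$ is tower-stable if for every prime $p$, $f_p$ is not a cyclic permutation of $\mathbb{Z}/p\mathbb{Z}$ of length $p$. A positive integer $b$ is valid if for all primes $p,q$ with $p\mid b$ and $q\mid p-1$ we have $q\mid b$; $b$ is $f$-valid if $b$ is square-free, valid, and for all primes $p,q$ with $p\mid b$ and $q\mid\lambda_f(p)$ we have $q\mid b$. *)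

theory Defs
  imports "HOL-Computational_Algebra.Polynomial" "HOL-Computational_Algebra.Squarefree"
begin

text \<open>Reduction of f modulo m, acting on the representatives {0..<m} of Z/mZ.\<close>
definition red :: "int poly \<Rightarrow> nat \<Rightarrow> nat \<Rightarrow> nat" where
  "red f m y = nat (poly f (int y) mod int m)"

definition cyc_len :: "int poly \<Rightarrow> nat \<Rightarrow> nat \<Rightarrow> nat" where
  "cyc_len f m y = (LEAST l. l \<ge> 1 \<and> (\<exists>k. (red f m ^^ k) y = (red f m ^^ (k + l)) y))"

definition period :: "int poly \<Rightarrow> nat \<Rightarrow> nat" where
  "period f m = Lcm (cyc_len f m ` {0..<m})"

definition full_cycle :: "int poly \<Rightarrow> nat \<Rightarrow> bool" where
  "full_cycle f p \<longleftrightarrow> bij_betw (red f p) {0..<p} {0..<p} \<and>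
     (\<exists>y\<in>{0..<p}. {(red f p ^^ k) y | k. True} = {0..<p})"

definition tower_stable :: "int poly \<Rightarrow> bool" where
  "tower_stable f \<longleftrightarrow> (\<forall>p::nat. prime p \<longrightarrow> \<not> full_cycle f p)"

definition valid :: "nat \<Rightarrow> bool" where
  "valid b \<longleftrightarrow> b > 0 \<and> (\<forall>p q::nat. prime p \<longrightarrow> prime q \<longrightarrow> p dvd b \<longrightarrow> q dvd (p - 1) \<longrightarrow> q dvd b)"

definition f_valid :: "int poly \<Rightarrow> nat \<Rightarrow> bool" where
  "f_valid f b \<longleftrightarrow> squarefree b \<and> valid b \<and>
     (\<forall>p q::nat. prime p \<longrightarrow> prime q \<longrightarrow> p dvd b \<longrightarrow> q dvd period f p \<longrightarrow> q dvd b)"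

end

theory Submission
  imports Defs "HOL-Number_Theory.Number_Theory"
begin

lemma poly_diff_dvd: "(x - y) dvd (poly (p::int poly) x - poly p y)"
proof (induction p)
  case 0 then show ?case by simp
next
  case (pCons a p)
  have "poly (pCons a p) x - poly (pCons a p) y = x * (poly p x - poly p y) + (x - y) * poly p y"
    by (simp add: algebra_simps)
  then show ?case using pCons by simp
qed

lemma poly_cong: "[a = b] (mod m) \<Longrightarrow> [poly (p::int poly) a = poly p b] (mod m)"
  by (metis cong_iff_dvd_diff dvd_trans poly_diff_dvd)

lemma poly_taylor: "h^2 dvd (poly (p::int poly) (z + h) - poly p z - poly (pderiv p) z * h)"
proof (induction p)
  case 0 then show ?case by simp
next
  case (pCons a p)
  have e: "poly (pCons a p) (z + h) - poly (pCons a p) z - poly (pderiv (pCons a p)) z * h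
     = z * (poly p (z + h) - poly p z - poly (pderiv p) z * h) + h * (poly p (z + h) - poly p z)"
    by (simp add: pderiv_pCons algebra_simps)
  have "h dvd (poly p (z + h) - poly p z)" using poly_diff_dvd[of "z+h" z p] by simp
  then have "h^2 dvd h * (poly p (z + h) - poly p z)" by (simp add: power2_eq_square)
  then show ?case unfolding e using pCons by simp
qed

definition F :: "int poly \<Rightarrow> nat \<Rightarrow> int \<Rightarrow> int" where
  "F f j = (poly f ^^ j)"

lemma F_add: "F f (a + b) y = F f a (F f b y)"
  by (simp add: F_def funpow_add)

lemma F_Suc: "F f (Suc j) y = poly f (F f j y)"
  by (simp add: F_def)

lemma F_0[simp]: "F f 0 y = y" by (simp add: F_def)

lemma F_cong: "[a = b] (mod m) \<Longrightarrow> [F f j a = F f j b] (mod m)"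
  by (induction j) (auto simp: F_Suc intro: poly_cong)

lemma red_F: assumes "m > 0" "y < m"
  shows "(red f m ^^ k) y = nat (F f k (int y) mod int m)"
proof (induction k)
  case 0 then show ?case using assms by simp
next
  case (Suc k)
  have "poly f (F f k (int y) mod int m) mod int m = poly f (F f k (int y)) mod int m"
    using poly_cong[of "F f k (int y) mod int m" "F f k (int y)" "int m" f]
    by (simp add: cong_def)
  then show ?case using Suc assms by (simp add: red_def F_Suc)
qed

lemma red_eq_iff: assumes "m > 0" "y < m"
  shows "((red f m ^^ a) y = (red f m ^^ b) y) \<longleftrightarrow> [F f a (int y) = F f b (int y)] (mod int m)"
  using assms by (simp add: red_F cong_def nat_eq_iff2) metis

lemma per_rep: assumes "[F f (K+T) y = F f K y] (mod m)" "j \<ge> K"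
  shows "[F f (j+T) y = F f j y] (mod m)"
proof -
  have "F f (j+T) y = F f (j-K) (F f (K+T) y)" "F f j y = F f (j-K) (F f K y)"
    using assms(2) by (simp_all flip: F_add)
  then show ?thesis using F_cong[OF assms(1)] by simp
qed

lemma per_mult: assumes "[F f (K+T) y = F f K y] (mod m)"
  shows "[F f (K + c*T) y = F f K y] (mod m)"
proof (induction c)
  case 0 then show ?case by simp
next
  case (Suc c)
  have "[F f (K + c*T + T) y = F f (K + c*T) y] (mod m)"
    by (rule per_rep[OF assms]) simp
  moreover have "K + Suc c * T = K + c*T + T" by simp
  ultimately show ?case using Suc by (metis cong_trans)
qed

lemma per_dvd: assumes "[F f (K+T) y = F f K y] (mod m)" "T dvd T'"
  shows "[F f (K+T') y = F f K y] (mod m)"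
  using per_mult[OF assms(1)] assms(2) by (auto simp: mult.commute elim!: dvdE)

lemma pigeon: assumes "m > 0"
  shows "\<exists>i j. i < j \<and> [F f j y = F f i y] (mod int m)"
proof (rule ccontr)
  assume "\<not> ?thesis"
  then have "inj_on (\<lambda>i. F f i y mod int m) {0..m}"
    unfolding inj_on_def cong_def by (metis linorder_neqE_nat)
  moreover have "(\<lambda>i. F f i y mod int m) ` {0..m} \<subseteq> {0..<int m}"
    using assms by auto
  ultimately have "card {0..m} \<le> card {0..<int m}"
    by (meson card_inj_on_le finite_atLeastLessThan_int)
  then show False by simp
qed

lemma cyc_props: assumes "m > 0" "y < m"
  shows "cyc_len f m y \<ge> 1 \<and> (\<exists>k. (red f m ^^ k) y = (red f m ^^ (k + cyc_len f m y)) y)"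
proof -
  obtain i j where ij: "i < j" "[F f j (int y) = F f i (int y)] (mod int m)"
    using pigeon[OF assms(1)] by blast
  then have "(red f m ^^ i) y = (red f m ^^ (i + (j - i))) y"
    using red_eq_iff[OF assms] by (simp add: cong_sym)
  then have "\<exists>l. l \<ge> 1 \<and> (\<exists>k. (red f m ^^ k) y = (red f m ^^ (k + l)) y)"
    using ij(1) by (intro exI[of _ "j-i"] conjI exI[of _ i]) auto
  then show ?thesis unfolding cyc_len_def by (rule LeastI_ex)
qed

lemma cyc_min: "l \<ge> 1 \<Longrightarrow> (red f m ^^ k) y = (red f m ^^ (k + l)) y \<Longrightarrow> cyc_len f m y \<le> l"
  unfolding cyc_len_def by (rule Least_le) blast

lemma cyc_dvd: assumes "m > 0" "y < m" "[F f (K+T) (int y) = F f K (int y)] (mod int m)"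
  shows "cyc_len f m y dvd T"
proof -
  define l where "l = cyc_len f m y"
  obtain K1 where K1: "(red f m ^^ K1) y = (red f m ^^ (K1 + l)) y" and l1: "l \<ge> 1"
    using cyc_props[OF assms(1,2)] l_def by blast
  have c1: "[F f (K1 + l) (int y) = F f K1 (int y)] (mod int m)"
    using K1 red_eq_iff[OF assms(1,2)] by (simp add: cong_sym)
  define K2 where "K2 = max K K1"
  define r where "r = T mod l"
  define q where "q = T div l"
  have T: "T = r + q * l" by (simp add: r_def q_def)
  have a: "[F f (K2 + r + l) (int y) = F f (K2 + r) (int y)] (mod int m)"
    by (rule per_rep[OF c1]) (simp add: K2_def)
  have b: "[F f (K2 + r + q*l) (int y) = F f (K2 + r) (int y)] (mod int m)"
    by (rule per_mult[OF a])
  have c: "[F f (K2 + T) (int y) = F f K2 (int y)] (mod int m)"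
    by (rule per_rep[OF assms(3)]) (simp add: K2_def)
  have d: "[F f (K2 + r) (int y) = F f K2 (int y)] (mod int m)"
    using b c T by (metis add.assoc cong_sym cong_trans)
  show ?thesis unfolding l_def[symmetric]
  proof (rule ccontr)
    assume "\<not> l dvd T" then have "r > 0" "r < l" using l1 mod_less_divisor[of l T] by (auto simp: r_def dvd_eq_mod_eq_0)
    have "(red f m ^^ K2) y = (red f m ^^ (K2 + r)) y"
      using d red_eq_iff[OF assms(1,2)] by (simp add: cong_sym)
    then have "l \<le> r" using cyc_min \<open>r > 0\<close> l_def by (metis One_nat_def Suc_leI)
    then show False using \<open>r < l\<close> by simp
  qed
qed

lemma period_dvd: "(\<And>y. y < m \<Longrightarrow> cyc_len f m y dvd T) \<Longrightarrow> period f m dvd T"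
  unfolding period_def by (auto intro!: Lcm_least)

lemma cyc_dvd_period: "y < m \<Longrightarrow> cyc_len f m y dvd period f m"
  unfolding period_def by (rule dvd_Lcm) auto


lemma period_pos: "m > 0 \<Longrightarrow> period f m > 0"
proof -
  assume m: "m > 0"
  have "\<forall>y\<in>{0..<m}. cyc_len f m y \<ge> 1" using cyc_props[OF m] by auto
  then have "0 \<notin> cyc_len f m ` {0..<m}" by fastforce
  then show ?thesis unfolding period_def using Lcm_0_iff[of "cyc_len f m ` {0..<m}"]
    by (simp del: Lcm_0_iff) (metis Lcm_0_iff finite_atLeastLessThan finite_imageI gr0I)
qed

lemma base_per: assumes "m > 0"
  shows "\<exists>K. [F f (K + period f m) z = F f K z] (mod int m)"
proof -
  define y where "y = nat (z mod int m)"
  have y: "y < m" "int y = z mod int m" using assms by (auto simp: y_def nat_less_iff)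
  obtain K where K: "(red f m ^^ K) y = (red f m ^^ (K + cyc_len f m y)) y"
    using cyc_props[OF assms y(1)] by blast
  have "[F f (K + cyc_len f m y) (int y) = F f K (int y)] (mod int m)"
    using K red_eq_iff[OF assms y(1)] by (simp add: cong_sym)
  then have c: "[F f (K + period f m) (int y) = F f K (int y)] (mod int m)"
    by (rule per_dvd) (rule cyc_dvd_period[OF y(1)])
  have zy: "[z = int y] (mod int m)" using y(2) by (simp add: cong_def)
  show ?thesis
    using F_cong[OF zy, of f "K + period f m"] F_cong[OF zy, of f K] c
    by (meson cong_sym cong_trans)
qed

primrec D :: "int poly \<Rightarrow> nat \<Rightarrow> int \<Rightarrow> int" where
  "D f 0 x = 1"
| "D f (Suc i) x = D f i x * poly (pderiv f) (F f i x)"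

lemma D_add: "D f (a + b) x = D f a x * D f b (F f a x)"
  by (induction b) (auto simp: F_add[symmetric] add.commute)

lemma D_cong: "[a = b] (mod m) \<Longrightarrow> [D f i a = D f i b] (mod m)"
  by (induction i) (auto intro!: cong_mult poly_cong F_cong)

lemma taylor_iter:
  assumes "q dvd h" "q dvd M" "M dvd q^2"
  shows "M dvd (F f i (x + h) - F f i x - D f i x * h)"
proof (induction i)
  case 0 then show ?case by simp
next
  case (Suc i)
  define z where "z = F f i x"
  define h' where "h' = F f i (x + h) - z"
  have "q dvd D f i x * h" using assms(1) by simp
  moreover have "q dvd h' - D f i x * h" using Suc assms(2) unfolding h'_def z_def
    by (metis diff_diff_eq dvd_trans)
  ultimately have qh: "q dvd h'" by (metis diff_add_cancel dvd_add)
  then have "q^2 dvd h'^2" by simp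
  then have A: "M dvd poly f (z + h') - poly f z - poly (pderiv f) z * h'"
    using poly_taylor[of h' f z] assms(3) by (meson dvd_trans)
  have B: "M dvd poly (pderiv f) z * (h' - D f i x * h)"
    using Suc unfolding h'_def z_def by (simp add: diff_diff_eq)
  have "F f (Suc i) (x + h) - F f (Suc i) x - D f (Suc i) x * h
     = (poly f (z + h') - poly f z - poly (pderiv f) z * h') + poly (pderiv f) z * (h' - D f i x * h)"
    by (simp add: F_Suc z_def h'_def algebra_simps)
  then show ?case using A B by simp
qed

lemma fermat_int: assumes "prime p" "\<not> int p dvd A"
  shows "[A ^ (p - 1) = 1] (mod int p)"
proof -
  define a where "a = nat (A mod int p)"
  have p0: "p > 0" using assms(1) prime_gt_0_nat by blast
  have a: "int a = A mod int p" using p0 by (simp add: a_def)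
  have "\<not> p dvd a"
  proof
    assume "p dvd a" then have "int p dvd int a" by simp
    then show False using a assms(2) by (simp add: dvd_mod_iff)
  qed
  then have "[a ^ (p - 1) = 1] (mod p)" using fermat_theorem assms(1) by blast
  then have "[int a ^ (p - 1) = 1] (mod int p)" using cong_int_iff[of "a ^ (p - 1)" 1 p] by simp
  moreover have "[A = int a] (mod int p)" using a by (simp add: cong_def)
  ultimately show ?thesis by (meson cong_pow cong_trans)
qed


lemma lift:
  assumes p: "prime p" and T: "T = period f p * (p - 1) * p ^ n"
  and H: "[F f (K + T) z = F f K z] (mod int (p ^ (n+1)))"
  shows "\<exists>K'. [F f (K' + T * p) z = F f K' z] (mod int (p ^ (n+2)))"
proof -
  define L where "L = period f p"
  define x where "x = F f K z"
  define q :: int where "q = int p ^ (n+1)"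
  define M :: int where "M = int p ^ (n+2)"
  have p1: "p \<ge> 2" using p prime_ge_2_nat by blast
  have L0: "L > 0" using period_pos p1 L_def by simp
  have T1: "T \<ge> 1" using T L0 p1 L_def by simp
  have Mq: "M = int p * q" by (simp add: M_def q_def)
  have qM: "q dvd M" by (simp add: Mq)
  have "q^2 = int p ^ ((n+1)*2)" by (simp only: q_def power_mult)
  then have Mqq: "M dvd q^2" unfolding M_def by (simp only:) (rule le_imp_power_dvd, simp)
  have gx: "[F f T x = x] (mod q)"
    using H by (simp add: x_def q_def F_add[symmetric] add.commute)
  have gxp: "[F f T x = x] (mod int p)"
    using gx by (rule cong_dvd_modulus) (simp add: q_def)
  obtain K0 where K0: "[F f (K0 + L) x = F f K0 x] (mod int p)"
    using base_per[of p f x] p1 L_def by auto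
  have cT: "[F f (K0 * T) x = x] (mod int p)"
    using per_mult[of f 0 T x "int p" K0] gxp by simp
  have perA: "[F f (i + L) x = F f i x] (mod int p)" for i
  proof -
    have e1: "F f (i + L) (F f (K0*T) x) = F f (i + K0*T + L) x"
      by (simp add: F_add[symmetric] algebra_simps)
    have e2: "F f i (F f (K0*T) x) = F f (i + K0*T) x"
      by (simp add: F_add[symmetric] algebra_simps)
    have c1: "[F f (i+L) x = F f (i+L) (F f (K0*T) x)] (mod int p)"
      using F_cong[OF cT] by (simp add: cong_sym)
    have "K0 \<le> i + K0 * T" using T1 by (metis le_add2 mult.right_neutral mult_le_mono2 order_trans)
    then have c2: "[F f (i + K0*T + L) x = F f (i + K0*T) x] (mod int p)"
      using per_rep[OF K0] by blast
    have c3: "[F f i (F f (K0*T) x) = F f i x] (mod int p)" using F_cong[OF cT] .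
    show ?thesis using c1 c2 c3 e1 e2 by (metis cong_trans)
  qed
  have DL: "[D f (c*L) x = D f L x ^ c] (mod int p)" for c
  proof (induction c)
    case 0 then show ?case by simp
  next
    case (Suc c)
    have "[F f (0 + c*L) x = F f 0 x] (mod int p)" by (rule per_mult) (use perA[of 0] in simp)
    then have "[D f L (F f (c*L) x) = D f L x] (mod int p)" using D_cong by simp
    then have "[D f (c*L) x * D f L (F f (c*L) x) = D f L x ^ c * D f L x] (mod int p)"
      using Suc by (rule cong_mult[rotated])
    moreover have "Suc c * L = c * L + L" by simp
    ultimately show ?case by (simp only: D_add) (simp add: mult.commute)
  qed
  define A where "A = D f L x"
  define e where "e = (p - 1) * p ^ n"
  have e1: "e \<ge> 1" using p1 by (simp add: e_def)
  have DT: "[D f T x = A ^ e] (mod int p)" using DL[of e] unfolding A_def e_def T L_def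
    by (simp add: mult.commute mult.left_commute)
  have D01: "int p dvd D f T x \<or> int p dvd D f T x - 1"
  proof (cases "int p dvd A")
    case True
    then have "int p dvd A ^ e" using e1 by (metis dvd_power dvd_trans not_one_le_zero gr0I)
    then show ?thesis using DT by (metis cong_dvd_iff)
  next
    case False
    then have "[A ^ (p-1) = 1] (mod int p)" using fermat_int p by blast
    then have "[(A ^ (p-1)) ^ (p^n) = 1 ^ (p^n)] (mod int p)" by (rule cong_pow)
    then have "[A ^ e = 1] (mod int p)" by (simp add: e_def power_mult)
    then have "[D f T x = 1] (mod int p)" using DT cong_trans by blast
    then show ?thesis by (simp add: cong_iff_dvd_diff)
  qed
  have tay: "M dvd (F f T w - F f T x - D f T x * (w - x))" if "[w = x] (mod q)" for w
    using taylor_iter[of q "w - x" M f T x] that qM Mqq by (simp add: cong_iff_dvd_diff)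
  have pq: "M dvd a * b" if "int p dvd a" "q dvd b" for a b
    using that by (simp add: Mq mult_dvd_mono)
  show ?thesis
  proof (cases "int p dvd D f T x")
    case True
    define w where "w = F f T x"
    have "M dvd D f T x * (w - x)" using True gx pq by (simp add: w_def cong_iff_dvd_diff)
    then have "M dvd F f T w - F f T x" using tay[of w] gx w_def
      by (metis diff_add_cancel dvd_add)
    then have "[F f (K + T + T) z = F f (K + T) z] (mod M)"
      by (simp add: w_def x_def cong_iff_dvd_diff F_add[symmetric] algebra_simps)
    then have "[F f (K + T + T * p) z = F f (K + T) z] (mod M)"
      by (rule per_dvd) simp
    then show ?thesis by (auto simp: M_def)
  next
    case False
    then have D1: "int p dvd D f T x - 1" using D01 by blast
    define c where "c = F f T x - x"
    have qc: "q dvd c" using gx by (simp add: c_def cong_iff_dvd_diff)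
    have it: "M dvd F f (j*T) x - (x + int j * c)" for j
    proof (induction j)
      case 0 then show ?case by simp
    next
      case (Suc j)
      define w where "w = F f (j*T) x"
      have "q dvd w - (x + int j * c)" using Suc qM w_def dvd_trans by blast
      moreover have "q dvd int j * c" using qc by simp
      moreover have "w - x = (w - (x + int j * c)) + int j * c" by simp
      ultimately have "q dvd w - x" by (metis dvd_add)
      then have t: "M dvd F f T w - F f T x - D f T x * (w - x)" using tay by (simp add: cong_iff_dvd_diff)
      have a: "M dvd D f T x * (w - x - int j * c)" using Suc w_def by (simp add: diff_diff_eq)
      have b: "M dvd (D f T x - 1) * (int j * c)" using pq D1 qc by simp
      have e1: "F f (Suc j * T) x = F f T w" by (simp add: w_def F_add[symmetric] algebra_simps)
      have e2: "F f T w - (x + int (Suc j) * c) =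
         (F f T w - F f T x - D f T x * (w - x)) + D f T x * (w - x - int j * c) + (D f T x - 1) * (int j * c)"
        by (simp add: c_def algebra_simps)
      show ?case unfolding e1 e2 using t a b by (intro dvd_add)
    qed
    have "M dvd int p * c" using qc by (simp add: Mq)
    moreover have "F f (p*T) x - x = (F f (p*T) x - (x + int p * c)) + int p * c" by simp
    ultimately have "[F f (p*T) x = x] (mod M)" using it[of p] unfolding cong_iff_dvd_diff
      by (metis dvd_add)
    then have "[F f (K + T * p) z = F f K z] (mod M)"
      by (simp add: x_def F_add[symmetric] algebra_simps)
    then show ?thesis by (auto simp: M_def)
  qed
qed


lemma prime_power_per: assumes "prime p"
  shows "\<exists>K. [F f (K + period f p * (p - 1) * p ^ n) z = F f K z] (mod int (p ^ (n+1)))"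
proof (induction n)
  case 0
  have p0: "p > 0" using assms prime_gt_0_nat by blast
  obtain K where "[F f (K + period f p) z = F f K z] (mod int p)" using base_per[OF p0] by blast
  then have "[F f (K + period f p * (p - 1)) z = F f K z] (mod int p)" by (rule per_dvd) simp
  then show ?case by auto
next
  case (Suc n)
  then obtain K where "[F f (K + period f p * (p - 1) * p ^ n) z = F f K z] (mod int (p ^ (n+1)))"
    by blast
  from lift[OF assms refl this] show ?case by (simp add: algebra_simps)
qed

lemma prime_dvd_Lcm_fin: "finite A \<Longrightarrow> prime (p::nat) \<Longrightarrow> p dvd Lcm A \<Longrightarrow> \<exists>a\<in>A. p dvd a"
proof (induction A rule: finite_induct)
  case empty then show ?case by simp
next
  case (insert a A)
  then have "p dvd lcm a (Lcm A)" by simp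
  moreover have "lcm a (Lcm A) dvd a * Lcm A" by (rule lcm_least) simp_all
  ultimately have "p dvd a * Lcm A" using dvd_trans by blast
  then show ?case using insert by (auto simp: prime_dvd_mult_iff)
qed

lemma red_lt: "m > 0 \<Longrightarrow> red f m z < m"
  by (simp add: red_def nat_less_iff)

lemma red_iter_lt: "m > 0 \<Longrightarrow> z < m \<Longrightarrow> (red f m ^^ k) z < m"
  by (induction k) (auto simp: red_lt)

lemma not_dvd_period: assumes ts: "tower_stable f" and p: "prime p"
  shows "\<not> p dvd period f p"
proof
  assume "p dvd period f p"
  then obtain y where y: "y < p" "p dvd cyc_len f p y"
    using prime_dvd_Lcm_fin[of "cyc_len f p ` {0..<p}" p] p unfolding period_def by auto
  have p0: "p > 0" using p prime_gt_0_nat by blast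
  define l where "l = cyc_len f p y"
  obtain K where K: "(red f p ^^ K) y = (red f p ^^ (K + l)) y" and l1: "l \<ge> 1"
    using cyc_props[OF p0 y(1)] l_def by blast
  define x where "x = (red f p ^^ K) y"
  have x: "x < p" using red_iter_lt[OF p0 y(1)] x_def by simp
  have it: "(red f p ^^ i) x = (red f p ^^ (K + i)) y" for i
    by (metis x_def add.commute comp_apply funpow_add)
  have inj: "inj_on (\<lambda>i. (red f p ^^ i) x) {0..<l}"
  proof (rule inj_onI, rule ccontr)
    fix i j assume ij: "i \<in> {0..<l}" "j \<in> {0..<l}" "(red f p ^^ i) x = (red f p ^^ j) x" "i \<noteq> j"
    have "\<exists>a b. a < b \<and> b < l \<and> (red f p ^^ a) x = (red f p ^^ b) x"
      using ij by (metis atLeastLessThan_iff linorder_neqE_nat)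
    then obtain a b where ab: "a < b" "b < l" "(red f p ^^ a) x = (red f p ^^ b) x" by blast
    then have "(red f p ^^ (K + a)) y = (red f p ^^ ((K + a) + (b - a))) y" using it by simp
    moreover have "b - a \<ge> 1" using ab by simp
    ultimately have "l \<le> b - a" using cyc_min[where l="b - a" and k="K + a"] l_def by simp
    then show False using ab by simp
  qed
  have sub: "(\<lambda>i. (red f p ^^ i) x) ` {0..<l} \<subseteq> {0..<p}" using red_iter_lt[OF p0 x] by auto
  have "l \<le> p" using card_inj_on_le[OF inj sub] by simp
  moreover have "p \<le> l" using y(2) l1 l_def by (simp add: dvd_imp_le)
  ultimately have lp: "l = p" by simp
  have img: "(\<lambda>i. (red f p ^^ i) x) ` {0..<p} = {0..<p}"
    using card_subset_eq[OF _ sub] card_image[OF inj] lp by simp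
  have xx: "(red f p ^^ p) x = x" using K it lp x_def by simp
  have "full_cycle f p"
    unfolding full_cycle_def
  proof
    have s1: "red f p ` {0..<p} \<subseteq> {0..<p}" using red_lt[OF p0] by auto
    have s2: "{0..<p} \<subseteq> red f p ` {0..<p}"
    proof
      fix z assume "z \<in> {0..<p}"
      then obtain i where i: "i < p" "z = (red f p ^^ i) x" using img by force
      show "z \<in> red f p ` {0..<p}"
      proof (cases i)
        case 0
        then have "z = red f p ((red f p ^^ (p - 1)) x)" using i xx p0
          by (metis Suc_diff_1 funpow.simps(2) o_apply funpow_0)
        then show ?thesis using red_iter_lt[OF p0 x] by auto
      next
        case (Suc k)
        then have "z = red f p ((red f p ^^ k) x)" using i by simp
        then show ?thesis using red_iter_lt[OF p0 x] by auto
      qed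
    qed
    show "bij_betw (red f p) {0..<p} {0..<p}"
      unfolding bij_betw_def using s1 s2 finite_surj_inj[OF _ s2] by auto
    have "{(red f p ^^ k) x | k. True} = {0..<p}"
      using img red_iter_lt[OF p0 x] by auto
    then show "\<exists>y\<in>{0..<p}. {(red f p ^^ k) y | k. True} = {0..<p}" using x by (intro bexI[of _ x]) auto
  qed
  then show False using ts p unfolding tower_stable_def by blast
qed

lemma primes_dvd_pow: "b > 0 \<Longrightarrow> (c::nat) > 0 \<Longrightarrow> (\<forall>q. prime q \<longrightarrow> q dvd c \<longrightarrow> q dvd b) \<Longrightarrow> c dvd b ^ c"
proof (induction c rule: less_induct)
  case (less c)
  show ?case
  proof (cases "c = 1")
    case True then show ?thesis by simp
  next
    case False
    then obtain q where q: "prime q" "q dvd c" using prime_factor_nat by blast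
    then obtain d where d: "c = q * d" by blast
    have q1: "q > 1" using q prime_gt_1_nat by blast
    have d0: "d > 0" using d less.prems by (metis gr0I mult_0_right less_irrefl)
    have dc: "d < c" using d q1 d0 by simp
    have "d dvd b ^ d" using less.IH[OF dc less.prems(1) d0] less.prems(3) d by simp
    then have "c dvd b * b ^ d" using d less.prems(3) q by (simp add: mult_dvd_mono)
    moreover have "b * b ^ d dvd b ^ c" using dc by (simp add: le_imp_power_dvd flip: power_Suc)
    ultimately show ?thesis by (rule dvd_trans)
  qed
qed

lemma squarefree_combine:
  "b > 0 \<Longrightarrow> squarefree (b::nat) \<Longrightarrow> (\<forall>p. prime p \<longrightarrow> p dvd b \<longrightarrow> int (p^k) dvd u) \<Longrightarrow> int (b^k) dvd u"
proof (induction b rule: less_induct)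
  case (less b)
  show ?case
  proof (cases "b = 1")
    case True then show ?thesis by simp
  next
    case False
    then obtain p where p: "prime p" "p dvd b" using prime_factor_nat by blast
    then obtain c where c: "b = p * c" by blast
    have p1: "p > 1" using p prime_gt_1_nat by blast
    have c0: "c > 0" using c less.prems by (metis gr0I mult_0_right less_irrefl)
    have cb: "c < b" using c p1 c0 by simp
    have sq: "squarefree c" using less.prems(2) c squarefree_multD(2) by blast
    have "\<not> p dvd c"
    proof
      assume "p dvd c" then have "p^2 dvd b" using c by (simp add: power2_eq_square)
      then show False using less.prems(2) p1 unfolding squarefree_def by auto
    qed
    then have cop: "coprime p c" using p prime_imp_coprime by blast
    have "int (c^k) dvd u" using less.IH[OF cb c0 sq] less.prems(3) c by simp
    moreover have "int (p^k) dvd u" using less.prems(3) p by blast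
    moreover have "coprime (int (p^k)) (int (c^k))" using cop by simp
    ultimately have "int (p^k) * int (c^k) dvd u" using divides_mult by blast
    then show ?thesis using c by (simp add: power_mult_distrib)
  qed
qed


theorem proposition4p5:
  fixes f :: "int poly" and b :: nat
  assumes "tower_stable f" and "b > 0" and "f_valid f b"
  shows "\<exists>N. \<forall>n\<ge>N. period f (b ^ (n + 1)) dvd b ^ n"
proof -
  note ts = assms(1) and b0 = assms(2) and fv = assms(3)
  define P where "P = {p. prime p \<and> p dvd b}"
  have finP: "finite P"
    by (rule finite_subset[of _ "{..b}"]) (auto simp: P_def b0 dvd_imp_le)
  define c where "c p = period f p * (p - 1)" for p
  have Tdvd: "c p * p^n dvd b^n" if pP: "p \<in> P" and cn: "c p \<le> n" for p n
  proof -
    have p: "prime p" "p dvd b" using pP by (auto simp: P_def)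
    have p1: "p \<ge> 2" using p prime_ge_2_nat by blast
    have c0: "c p > 0" using period_pos[of p f] p1 by (simp add: c_def)
    have "\<forall>q. prime q \<longrightarrow> q dvd c p \<longrightarrow> q dvd b"
    proof (intro allI impI)
      fix q :: nat assume q: "prime q" "q dvd c p"
      then have "q dvd period f p \<or> q dvd p - 1" by (simp add: c_def prime_dvd_mult_iff)
      then show "q dvd b" using fv q p unfolding f_valid_def valid_def by blast
    qed
    then have "c p dvd b ^ c p" using primes_dvd_pow b0 c0 by blast
    moreover have "b ^ c p dvd b ^ n" using cn by (rule le_imp_power_dvd)
    ultimately have A: "c p dvd b ^ n" by (rule dvd_trans)
    have B: "p ^ n dvd b ^ n" using p by (simp add: dvd_power_same)
    have "\<not> p dvd p - 1"
    proof
      assume "p dvd p - 1"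
      then have "p \<le> p - 1" by (rule dvd_imp_le) (use p1 in simp)
      then show False using p1 by simp
    qed
    then have "\<not> p dvd c p" using not_dvd_period[OF ts p(1)] p(1) by (simp add: c_def prime_dvd_mult_iff)
    then have "coprime p (c p)" using p prime_imp_coprime by blast
    then have "coprime (c p) (p ^ n)" by (simp add: coprime_commute)
    then show ?thesis using A B divides_mult by blast
  qed
  define N where "N = (\<Sum>p\<in>P. c p)"
  show ?thesis
  proof (intro exI[of _ N] allI impI)
    fix n assume nN: "n \<ge> N"
    have cle: "c p \<le> n" if "p \<in> P" for p
      using member_le_sum[of p P c] finP that nN N_def by simp
    have bn0: "b^(n+1) > 0" using b0 by simp
    show "period f (b^(n+1)) dvd b^n"
    proof (rule period_dvd)
      fix y assume y: "y < b^(n+1)"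
      have "\<forall>p\<in>P. \<exists>K. \<forall>j\<ge>K. [F f (j + b^n) (int y) = F f j (int y)] (mod int (p^(n+1)))"
      proof
        fix p assume pP: "p \<in> P"
        then have p: "prime p" by (simp add: P_def)
        obtain K where K: "[F f (K + period f p * (p - 1) * p ^ n) (int y) = F f K (int y)] (mod int (p ^ (n+1)))"
          using prime_power_per[OF p] by blast
        have "[F f (K + b^n) (int y) = F f K (int y)] (mod int (p ^ (n+1)))"
          using per_dvd[OF K] Tdvd[OF pP cle[OF pP]] by (simp add: c_def)
        then show "\<exists>K. \<forall>j\<ge>K. [F f (j + b^n) (int y) = F f j (int y)] (mod int (p^(n+1)))"
          using per_rep by blast
      qed
      then have "\<exists>Kf. \<forall>p\<in>P. \<forall>j\<ge>Kf p. [F f (j + b^n) (int y) = F f j (int y)] (mod int (p^(n+1)))"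
        by (rule bchoice)
      then obtain Kf where Kf: "\<forall>p\<in>P. \<forall>j\<ge>Kf p. [F f (j + b^n) (int y) = F f j (int y)] (mod int (p^(n+1)))"
        by blast
      define K where "K = (\<Sum>p\<in>P. Kf p)"
      have "\<forall>p. prime p \<longrightarrow> p dvd b \<longrightarrow> int (p^(n+1)) dvd F f (K + b^n) (int y) - F f K (int y)"
      proof (intro allI impI)
        fix p :: nat assume "prime p" "p dvd b"
        then have pP: "p \<in> P" by (simp add: P_def)
        have "Kf p \<le> K" using member_le_sum[of p P Kf] finP pP K_def by simp
        then show "int (p^(n+1)) dvd F f (K + b^n) (int y) - F f K (int y)"
          using Kf pP by (simp add: cong_iff_dvd_diff)
      qed
      then have "int (b^(n+1)) dvd F f (K + b^n) (int y) - F f K (int y)"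
        using squarefree_combine b0 fv unfolding f_valid_def by blast
      then have "[F f (K + b^n) (int y) = F f K (int y)] (mod int (b^(n+1)))"
        by (simp add: cong_iff_dvd_diff)
      then show "cyc_len f (b^(n+1)) y dvd b^n" by (rule cyc_dvd[OF bn0 y])
    qed
  qed
qed

end
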